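(* Let $\mathbb{F}$ be a field, $d\geq 3$ an integer and $V$ a vector space over $\mathbb{F}$ of dimension $d+1$. Let $E^*_0,\dots,E^*_d$ be a system of mutually orthogonal idempotents in $\mathrm{End}(V)$, and let $A\in\mathrm{End}(V)$ satisfy $E^*_iAE^*_j=0$ if $|i-j|>1$ and $E^*_iAE^*_j\neq 0$ if $|i-j|=1$. Assume $A$ is multiplicity-free and bipartite, with primitive idempotents $E_0,\dots,E_d$ and corresponding eigenvalues $\theta_0,\dots,\theta_d$. Let $\theta^*_0,\dots,\theta^*_d\in\mathbb{F}$ and $A^*=\sum_i\theta^*_iE^*_i$. Assume $E_0$ is normalizing and that in $\Delta$ the vertex $E_0$ is adjacent to $E_1$ and to no other vertex. Then, with $a^*_0=\operatorname{tr}(E_0A^* )$, $$a^*_0=\frac{\theta_1\theta^*_0-\theta_0\theta^*_1}{\theta_1-\theta_0}=\frac{\theta_1\theta^*_d-\theta_0\theta^*_{d-1}}{\theta_1-\theta_0}.$$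
   Context: A system of mutually orthogonal idempotents is a sequence $E^*_0,\dots,E^*_d$ of linear maps $V\to V$ with $E^*_iE^*_j=\delta_{ij}E^*_i$ and $\operatorname{rank}E^*_i=1$. $A$ is multiplicity-free if it has $d+1$ mutually distinct eigenvalues in $\mathbb{F}$; the primitive idempotent $E_i$ for $\theta_i$ is the projection onto the $\theta_i$-eigenspace along the sum of the other eigenspaces. $A$ is bipartite if $\operatorname{tr}(E^*_iA)=0$ for all $i$. $\Delta$ is the graph whose vertices are $E_0,\dots,E_d$, with $E_i\neq E_j$ adjacent iff $E_iA^*E_j\neq 0$. For a basis $v_0,\dots,v_d$, the matrix $Y$ representing $A$ satisfies $Av_j=\sum_iY_{ij}v_i$. An eigenvalue $\theta$ of $A$ is normalizing if there is a basis $v_0,\dots,v_d$ of $V$ with $v_i\in E^*_iV$ such that every row of the matrix representing $A$ sums to $\theta$; $E_i$ is normalizing if $\theta_i$ is. *)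

theory Defs
  imports "Jordan_Normal_Form.Jordan_Normal_Form" "Jordan_Normal_Form.DL_Rank"
begin

text \<open>Endomorphisms of V = F^(d+1) are represented by (d+1) x (d+1) matrices.\<close>

definition mat_trace :: "'a::comm_ring_1 mat \<Rightarrow> 'a" where
  "mat_trace M = (\<Sum>i<dim_row M. M $$ (i, i))"

definition mat_lincomb :: "nat \<Rightarrow> nat \<Rightarrow> (nat \<Rightarrow> 'a::comm_ring_1) \<Rightarrow> (nat \<Rightarrow> 'a mat) \<Rightarrow> 'a mat" where
  "mat_lincomb n d c M = mat n n (\<lambda>(r, s). \<Sum>i\<le>d. c i * M i $$ (r, s))"

definition orth_idempotent_system :: "nat \<Rightarrow> nat \<Rightarrow> (nat \<Rightarrow> 'a::field mat) \<Rightarrow> bool" where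
  "orth_idempotent_system n d Es \<longleftrightarrow>
     (\<forall>i\<le>d. Es i \<in> carrier_mat n n \<and> vec_space.rank n (Es i) = 1) \<and>
     (\<forall>i\<le>d. \<forall>j\<le>d. Es i * Es j = (if i = j then Es i else 0\<^sub>m n n))"

definition primitive_idempotent :: "nat \<Rightarrow> 'a::field mat \<Rightarrow> 'a \<Rightarrow> 'a mat \<Rightarrow> bool" where
  "primitive_idempotent n A \<theta> M \<longleftrightarrow> M \<in> carrier_mat n n \<and>
     (\<forall>v \<in> carrier_vec n. A *\<^sub>v v = \<theta> \<cdot>\<^sub>v v \<longrightarrow> M *\<^sub>v v = v) \<and>
     (\<forall>v \<in> carrier_vec n. \<forall>\<mu>. \<mu> \<noteq> \<theta> \<and> A *\<^sub>v v = \<mu> \<cdot>\<^sub>v v \<longrightarrow> M *\<^sub>v v = 0\<^sub>v n)"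

text \<open>theta is normalizing: there is a basis v_0..v_d with v_i in E*_i V such that
  the matrix Y representing A in this basis (A v_j = sum_i Y_ij v_i, i.e. A P = P Y
  where P has columns v_0..v_d) has all row sums equal to theta.\<close>
definition normalizing :: "nat \<Rightarrow> (nat \<Rightarrow> 'a::field mat) \<Rightarrow> 'a mat \<Rightarrow> 'a \<Rightarrow> bool" where
  "normalizing d Es A \<theta> \<longleftrightarrow>
     (\<exists>v :: nat \<Rightarrow> 'a vec. \<exists>Y.
        (\<forall>i\<le>d. v i \<in> carrier_vec (d+1) \<and> (\<exists>w \<in> carrier_vec (d+1). v i = Es i *\<^sub>v w)) \<and>
        det (mat_of_cols (d+1) (map v [0..<d+1])) \<noteq> 0 \<and>
        Y \<in> carrier_mat (d+1) (d+1) \<and>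
        A * mat_of_cols (d+1) (map v [0..<d+1]) = mat_of_cols (d+1) (map v [0..<d+1]) * Y \<and>
        (\<forall>i\<le>d. (\<Sum>j\<le>d. Y $$ (i, j)) = \<theta>))"

end

theory Submission
  imports Defs
begin

lemma mat_inv_ex:
  fixes P :: "'a::field mat"
  assumes P: "P \<in> carrier_mat n n" and d: "det P \<noteq> 0"
  shows "\<exists>Q. Q \<in> carrier_mat n n \<and> P * Q = 1\<^sub>m n \<and> Q * P = 1\<^sub>m n"
proof -
  from det_non_zero_imp_unit[OF P d, of "()"]
  obtain Q where QP: "Q * P = 1\<^sub>m n" and Q: "Q \<in> carrier_mat n n"
    unfolding Units_def ring_mat_def by auto
  have "P * Q = 1\<^sub>m n" using mat_mult_left_right_inverse[OF Q P QP] .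
  thus ?thesis using Q QP by blast
qed

lemma mat_trace_comm:
  fixes A B :: "'a::comm_ring_1 mat"
  assumes A: "A \<in> carrier_mat n m" and B: "B \<in> carrier_mat m n"
  shows "mat_trace (A * B) = mat_trace (B * A)"
proof -
  have "mat_trace (A * B) = (\<Sum>i<n. \<Sum>k<m. A $$ (i,k) * B $$ (k,i))"
    using A B unfolding mat_trace_def
    by (auto simp: scalar_prod_def lessThan_atLeast0 intro!: sum.cong)
  also have "\<dots> = (\<Sum>k<m. \<Sum>i<n. B $$ (k,i) * A $$ (i,k))"
    by (subst sum.swap) (simp add: mult.commute)
  also have "\<dots> = mat_trace (B * A)"
    using A B unfolding mat_trace_def
    by (auto simp: scalar_prod_def lessThan_atLeast0 intro!: sum.cong)
  finally show ?thesis .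
qed

lemma polyprod:
  fixes A :: "'a::field mat"
  assumes A: "A \<in> carrier_mat n n" and xv: "xv \<in> carrier_vec n" and ev: "A *\<^sub>v xv = t \<cdot>\<^sub>v xv"
  shows "foldr (\<lambda>k M. (A - \<theta> k \<cdot>\<^sub>m 1\<^sub>m n) * M) ks (1\<^sub>m n) \<in> carrier_mat n n \<and>
         foldr (\<lambda>k M. (A - \<theta> k \<cdot>\<^sub>m 1\<^sub>m n) * M) ks (1\<^sub>m n) *\<^sub>v xv = prod_list (map (\<lambda>k. t - \<theta> k) ks) \<cdot>\<^sub>v xv"
proof (induction ks)
  case Nil
  then show ?case using xv by auto
next
  case (Cons k ks)
  let ?M = "foldr (\<lambda>k M. (A - \<theta> k \<cdot>\<^sub>m 1\<^sub>m n) * M) ks (1\<^sub>m n)"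
  let ?p = "prod_list (map (\<lambda>k. t - \<theta> k) ks)"
  have M: "?M \<in> carrier_mat n n" and Mx: "?M *\<^sub>v xv = ?p \<cdot>\<^sub>v xv" using Cons by auto
  have B: "A - \<theta> k \<cdot>\<^sub>m 1\<^sub>m n \<in> carrier_mat n n" using A by auto
  have Bx: "(A - \<theta> k \<cdot>\<^sub>m 1\<^sub>m n) *\<^sub>v xv = (t - \<theta> k) \<cdot>\<^sub>v xv"
    using A xv ev by (intro eq_vecI) (auto simp: minus_mult_distrib_mat_vec[OF A _ xv] algebra_simps)
  have "((A - \<theta> k \<cdot>\<^sub>m 1\<^sub>m n) * ?M) *\<^sub>v xv = (A - \<theta> k \<cdot>\<^sub>m 1\<^sub>m n) *\<^sub>v (?M *\<^sub>v xv)"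
    using B M xv by simp
  also have "\<dots> = ?p \<cdot>\<^sub>v ((t - \<theta> k) \<cdot>\<^sub>v xv)" unfolding Mx using mult_mat_vec[OF B xv] Bx by simp
  also have "\<dots> = ((t - \<theta> k) * ?p) \<cdot>\<^sub>v xv" by (simp add: smult_smult_assoc mult.commute)
  finally show ?case using B M by simp
qed

lemma eig_indep:
  fixes A :: "'a::field mat"
  assumes A: "A \<in> carrier_mat n n"
    and x: "\<forall>j<n. x j \<in> carrier_vec n \<and> x j \<noteq> 0\<^sub>v n \<and> A *\<^sub>v x j = \<theta> j \<cdot>\<^sub>v x j"
    and dist: "\<forall>i<n. \<forall>j<n. i \<noteq> j \<longrightarrow> \<theta> i \<noteq> \<theta> j"
  shows "det (mat_of_cols n (map x [0..<n])) \<noteq> 0"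
proof
  let ?X = "mat_of_cols n (map x [0..<n])"
  have X: "?X \<in> carrier_mat n n" by (metis length_map length_upt minus_nat.diff_0 mat_of_cols_carrier(1))
  have Xij: "?X $$ (r, i) = x i $ r" if "r < n" "i < n" for r i
    using that unfolding mat_of_cols_def by auto
  assume "det ?X = 0"
  then obtain c where c: "c \<in> carrier_vec n" "c \<noteq> 0\<^sub>v n" "?X *\<^sub>v c = 0\<^sub>v n"
    using det_0_iff_vec_prod_zero_field[OF X] by auto
  have cz: "c $ j = 0" if j: "j < n" for j
  proof -
    let ?ks = "filter (\<lambda>k. k \<noteq> j) [0..<n]"
    let ?M = "foldr (\<lambda>k M. (A - \<theta> k \<cdot>\<^sub>m 1\<^sub>m n) * M) ?ks (1\<^sub>m n)"
    let ?p = "\<lambda>i. prod_list (map (\<lambda>k. \<theta> i - \<theta> k) ?ks)"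
    have M: "?M \<in> carrier_mat n n" using polyprod[OF A, of "x 0" "\<theta> 0" \<theta> ?ks] x j by auto
    have Mx: "?M *\<^sub>v x i = ?p i \<cdot>\<^sub>v x i" if "i < n" for i
      using polyprod[OF A, of "x i" "\<theta> i" \<theta> ?ks] x that by auto
    have p0: "?p i = 0" if "i < n" "i \<noteq> j" for i
      using that by (auto simp: prod_list_zero_iff)
    have pj: "?p j \<noteq> 0" using dist j by (auto simp: prod_list_zero_iff)
    have MX: "(?M * ?X) $$ (r, i) = ?p i * x i $ r" if "r < n" "i < n" for r i
    proof -
      have "(?M * ?X) $$ (r, i) = row ?M r \<bullet> col ?X i" using M X that by simp
      also have "col ?X i = x i" using that x by simp
      also have "row ?M r \<bullet> x i = (?M *\<^sub>v x i) $ r" using M that by simp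
      moreover have "dim_vec (x i) = n" using x that by auto
      ultimately show ?thesis using Mx[OF that(2)] that by simp
    qed
    have "(?M * ?X) *\<^sub>v c = ?M *\<^sub>v 0\<^sub>v n" using M X c by simp
    also have "\<dots> = 0\<^sub>v n" using M by (intro eq_vecI) auto
    finally have "(?M * ?X) *\<^sub>v c = 0\<^sub>v n" .
    hence "((?M * ?X) *\<^sub>v c) $ r = 0" if "r < n" for r using that by simp
    moreover have "((?M * ?X) *\<^sub>v c) $ r = ?p j * x j $ r * c $ j" if r: "r < n" for r
    proof -
      define N where "N = ?M * ?X"
      have N: "N \<in> carrier_mat n n" using M X unfolding N_def by simp
      have "(N *\<^sub>v c) $ r = (\<Sum>i<n. N $$ (r, i) * c $ i)"
        using N c r by (simp add: scalar_prod_def lessThan_atLeast0)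
      also have "\<dots> = (\<Sum>i<n. if i = j then ?p j * x j $ r * c $ j else 0)"
        using MX r p0 unfolding N_def by (intro sum.cong) auto
      finally show ?thesis using j unfolding N_def by simp
    qed
    ultimately have z: "?p j * x j $ r * c $ j = 0" if "r < n" for r using that by metis
    obtain r where r: "r < n" "x j $ r \<noteq> 0"
      using x j by (metis carrier_vecD eq_vecI index_zero_vec(1) index_zero_vec(2))
    show ?thesis using z[OF r(1)] r pj by simp
  qed
  have "c = 0\<^sub>v n" using c cz by (intro eq_vecI) auto
  with c show False by simp
qed

lemma tri_fwd:
  fixes Y :: "'a::field mat"
  assumes Yz: "\<forall>i<n. \<forall>j<n. (i > j+1 \<or> j > i+1) \<longrightarrow> Y$$(i,j) = 0"
    and Ynz: "\<forall>i. i+1<n \<longrightarrow> Y$$(i+1,i) \<noteq> 0 \<and> Y$$(i,i+1) \<noteq> 0"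
    and rec: "\<forall>c<n. (\<Sum>k<n. f k * Y$$(k,c)) = t * f c"
    and f0: "f 0 = 0"
  shows "\<forall>k<n. f k = 0"
proof -
  have "\<forall>k\<le>m. f k = 0" if "m < n" for m
    using that
  proof (induction m)
    case 0 then show ?case using f0 by auto
  next
    case (Suc m)
    have IH: "\<forall>k\<le>m. f k = 0" using Suc by auto
    have "(\<Sum>k<n. f k * Y$$(k,m)) = (\<Sum>k<n. if k = Suc m then f (Suc m) * Y$$(Suc m, m) else 0)"
    proof (intro sum.cong refl)
      fix k assume k: "k \<in> {..<n}"
      show "f k * Y$$(k,m) = (if k = Suc m then f (Suc m) * Y$$(Suc m, m) else 0)"
        using IH Yz k Suc.prems by (cases "k \<le> m"; cases "k = Suc m"; auto)
    qed
    also have "\<dots> = f (Suc m) * Y$$(Suc m, m)" using Suc.prems by simp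
    finally have "f (Suc m) * Y$$(Suc m, m) = 0" using rec IH Suc.prems by auto
    moreover have "Y$$(Suc m, m) \<noteq> 0" using Ynz Suc.prems by auto
    ultimately have "f (Suc m) = 0" by simp
    then show ?case using IH le_Suc_eq by auto
  qed
  thus ?thesis by auto
qed

lemma tri_bwd:
  fixes Y :: "'a::field mat"
  assumes Yz: "\<forall>i<n. \<forall>j<n. (i > j+1 \<or> j > i+1) \<longrightarrow> Y$$(i,j) = 0"
    and Ynz: "\<forall>i. i+1<n \<longrightarrow> Y$$(i+1,i) \<noteq> 0 \<and> Y$$(i,i+1) \<noteq> 0"
    and rec: "\<forall>c<n. (\<Sum>k<n. f k * Y$$(k,c)) = t * f c"
    and f0: "f (n-1) = 0"
  shows "\<forall>k<n. f k = 0"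
proof -
  have "\<forall>k. n-1-m \<le> k \<longrightarrow> k < n \<longrightarrow> f k = 0" if "m < n" for m
    using that
  proof (induction m)
    case 0
    have "k = n - 1" if "n - 1 \<le> k" "k < n" for k using that by linarith
    then show ?case using f0 by auto
  next
    case (Suc m)
    define c where "c = n - 1 - m"
    have c1: "c \<ge> 1" "c < n" and cm: "n - 1 - Suc m = c - 1" using Suc.prems unfolding c_def by auto
    have IH: "\<forall>k. c \<le> k \<longrightarrow> k < n \<longrightarrow> f k = 0" using Suc unfolding c_def by auto
    have "(\<Sum>k<n. f k * Y$$(k,c)) = (\<Sum>k<n. if k = c - 1 then f (c-1) * Y$$(c-1, c) else 0)"
    proof (intro sum.cong refl)
      fix k assume k: "k \<in> {..<n}"
      show "f k * Y$$(k,c) = (if k = c - 1 then f (c-1) * Y$$(c-1, c) else 0)"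
        using IH Yz k c1 by (cases "c \<le> k"; cases "k = c - 1"; auto)
    qed
    also have "\<dots> = f (c-1) * Y$$(c-1, c)" using c1 by simp
    finally have "f (c-1) * Y$$(c-1, c) = 0" using rec IH c1 by auto
    moreover have "Y$$(c-1, c) \<noteq> 0" using Ynz[rule_format, of "c-1"] c1 by auto
    ultimately have "f (c-1) = 0" by simp
    have "f k = 0" if "c - 1 \<le> k" "k < n" for k
    proof (cases "k = c - 1")
      case True then show ?thesis using \<open>f (c-1) = 0\<close> by simp
    next
      case False then have "c \<le> k" using that c1 by linarith
      then show ?thesis using IH that by blast
    qed
    then show ?case unfolding cm by blast
  qed
  from this[of "n-1"] show ?thesis by (cases n) auto
qed

definition dm :: "nat \<Rightarrow> nat \<Rightarrow> 'a::comm_ring_1 mat" where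
  "dm n i = mat n n (\<lambda>(r,c). if r = i \<and> c = i then 1 else 0)"

definition dg :: "nat \<Rightarrow> (nat \<Rightarrow> 'a::comm_ring_1) \<Rightarrow> 'a mat" where
  "dg n f = mat n n (\<lambda>(r,c). if r = c then f r else 0)"

lemma dm_carrier[simp]: "dm n i \<in> carrier_mat n n" unfolding dm_def by simp
lemma dg_carrier[simp]: "dg n f \<in> carrier_mat n n" unfolding dg_def by simp
lemma dm_dims[simp]: "dim_row (dm n i) = n" "dim_col (dm n i) = n" unfolding dm_def by simp_all
lemma dg_dims[simp]: "dim_row (dg n f) = n" "dim_col (dg n f) = n" unfolding dg_def by simp_all

lemma dm_left:
  assumes M: "M \<in> carrier_mat n m" and i: "i < n" and r: "r < n" and c: "c < m"
  shows "(dm n i * M) $$ (r,c) = (if r = i then M $$ (i,c) else 0)"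
proof -
  have "(dm n i * M) $$ (r,c) = (\<Sum>l<n. (if r = i \<and> l = i then 1 else 0) * M $$ (l,c))"
    using M r c unfolding dm_def by (simp add: scalar_prod_def lessThan_atLeast0)
  also have "\<dots> = (\<Sum>l<n. if l = i then (if r = i then M $$ (i,c) else 0) else 0)"
    by (intro sum.cong) auto
  finally show ?thesis using i by simp
qed

lemma dm_right:
  assumes M: "M \<in> carrier_mat m n" and i: "i < n" and r: "r < m" and c: "c < n"
  shows "(M * dm n i) $$ (r,c) = (if c = i then M $$ (r,i) else 0)"
proof -
  have "(M * dm n i) $$ (r,c) = (\<Sum>l<n. M $$ (r,l) * (if l = i \<and> c = i then 1 else 0))"
    using M r c unfolding dm_def by (simp add: scalar_prod_def lessThan_atLeast0)
  also have "\<dots> = (\<Sum>l<n. if l = i then (if c = i then M $$ (r,i) else 0) else 0)"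
    by (intro sum.cong) auto
  finally show ?thesis using i by simp
qed

lemma dm_sandwich:
  assumes M: "M \<in> carrier_mat n n" and i: "i < n" and j: "j < n" and r: "r < n" and c: "c < n"
  shows "(dm n i * M * dm n j) $$ (r,c) = (if r = i \<and> c = j then M $$ (i,j) else 0)"
proof -
  have "dm n i * M \<in> carrier_mat n n" using mult_carrier_mat[OF dm_carrier M] .
  from dm_right[OF this j r c] dm_left[OF M i r j] show ?thesis by auto
qed

lemma dg_right:
  assumes M: "M \<in> carrier_mat m n"
  shows "M * dg n f = mat m n (\<lambda>(r,c). M $$ (r,c) * f c)"
proof (rule eq_matI)
  fix r c assume rc: "r < dim_row (mat m n (\<lambda>(r,c). M $$ (r,c) * f c))" "c < dim_col (mat m n (\<lambda>(r,c). M $$ (r,c) * f c))"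
  have "(M * dg n f) $$ (r,c) = (\<Sum>l<n. M $$ (r,l) * (if l = c then f l else 0))"
    using M rc unfolding dg_def by (simp add: scalar_prod_def lessThan_atLeast0)
  also have "\<dots> = (\<Sum>l<n. if l = c then M $$ (r,c) * f c else 0)"
    by (intro sum.cong) auto
  finally show "(M * dg n f) $$ (r,c) = mat m n (\<lambda>(r,c). M $$ (r,c) * f c) $$ (r,c)" using rc by simp
qed (use M in \<open>auto simp: dg_def\<close>)

lemma dg_left:
  assumes M: "M \<in> carrier_mat n m"
  shows "dg n f * M = mat n m (\<lambda>(r,c). f r * M $$ (r,c))"
proof (rule eq_matI)
  fix r c assume rc: "r < dim_row (mat n m (\<lambda>(r,c). f r * M $$ (r,c)))" "c < dim_col (mat n m (\<lambda>(r,c). f r * M $$ (r,c)))"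
  have "(dg n f * M) $$ (r,c) = (\<Sum>l<n. (if r = l then f r else 0) * M $$ (l,c))"
    using M rc unfolding dg_def by (simp add: scalar_prod_def lessThan_atLeast0)
  also have "\<dots> = (\<Sum>l<n. if l = r then f r * M $$ (r,c) else 0)"
    by (intro sum.cong) auto
  finally show "(dg n f * M) $$ (r,c) = mat n m (\<lambda>(r,c). f r * M $$ (r,c)) $$ (r,c)" using rc by simp
qed (use M in \<open>auto simp: dg_def\<close>)

lemma trace_dm:
  assumes M: "M \<in> carrier_mat n n" and i: "i < n"
  shows "mat_trace (dm n i * M) = M $$ (i,i)"
proof -
  have "mat_trace (dm n i * M) = (\<Sum>r<n. (dm n i * M) $$ (r,r))" unfolding mat_trace_def using M by simp
  also have "\<dots> = (\<Sum>r<n. if r = i then M $$ (i,i) else 0)"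
    using dm_left[OF M i] by (intro sum.cong) auto
  finally show ?thesis using i by simp
qed

theorem lemma7p4:
  fixes d :: nat
    and Es E :: "nat \<Rightarrow> 'a::field mat"
    and A As :: "'a mat"
    and \<theta> \<theta>s :: "nat \<Rightarrow> 'a"
  assumes d3: "d \<ge> 3"
    and Es_sys: "orth_idempotent_system (d+1) d Es"
    and A_carrier: "A \<in> carrier_mat (d+1) (d+1)"
    and tridiag0: "\<forall>i\<le>d. \<forall>j\<le>d. \<bar>int i - int j\<bar> > 1 \<longrightarrow> Es i * A * Es j = 0\<^sub>m (d+1) (d+1)"
    and tridiag1: "\<forall>i\<le>d. \<forall>j\<le>d. \<bar>int i - int j\<bar> = 1 \<longrightarrow> Es i * A * Es j \<noteq> 0\<^sub>m (d+1) (d+1)"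
    and mult_free: "\<forall>i\<le>d. \<forall>j\<le>d. i \<noteq> j \<longrightarrow> \<theta> i \<noteq> \<theta> j"
    and eigval: "\<forall>i\<le>d. eigenvalue A (\<theta> i)"
    and prim: "\<forall>i\<le>d. primitive_idempotent (d+1) A (\<theta> i) (E i)"
    and bipartite: "\<forall>i\<le>d. mat_trace (Es i * A) = 0"
    and As_def: "As = mat_lincomb (d+1) d \<theta>s Es"
    and normalizing: "normalizing d Es A (\<theta> 0)"
    and adj01: "E 0 * As * E 1 \<noteq> 0\<^sub>m (d+1) (d+1)"
    and nonadj: "\<forall>j. 2 \<le> j \<and> j \<le> d \<longrightarrow> E 0 * As * E j = 0\<^sub>m (d+1) (d+1)"
  shows "mat_trace (E 0 * As) = (\<theta> 1 * \<theta>s 0 - \<theta> 0 * \<theta>s 1) / (\<theta> 1 - \<theta> 0)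
       \<and> mat_trace (E 0 * As) = (\<theta> 1 * \<theta>s d - \<theta> 0 * \<theta>s (d - 1)) / (\<theta> 1 - \<theta> 0)"

proof -
  define n where "n = d + 1"
  have dn: "d < n" and n0: "0 < n" using n_def by auto
  from normalizing[unfolded normalizing_def] obtain v Y where
    vc: "\<forall>i\<le>d. v i \<in> carrier_vec n \<and> (\<exists>w \<in> carrier_vec n. v i = Es i *\<^sub>v w)"
    and detP: "det (mat_of_cols n (map v [0..<n])) \<noteq> 0"
    and Yc: "Y \<in> carrier_mat n n"
    and APY: "A * mat_of_cols n (map v [0..<n]) = mat_of_cols n (map v [0..<n]) * Y"
    unfolding n_def by blast
  define P where "P = mat_of_cols n (map v [0..<n])"
  have Ac: "A \<in> carrier_mat n n" using A_carrier n_def by simp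
  have Esc: "Es i \<in> carrier_mat n n" if "i < n" for i using Es_sys that unfolding orth_idempotent_system_def n_def by auto
  have EsEs: "Es i * Es j = (if i = j then Es i else 0\<^sub>m n n)" if "i < n" "j < n" for i j
    using Es_sys that unfolding orth_idempotent_system_def n_def by auto
  have vcar: "v i \<in> carrier_vec n" if "i < n" for i using vc that n_def by auto
  have Pc: "P \<in> carrier_mat n n" unfolding P_def by (metis length_map length_upt minus_nat.diff_0 mat_of_cols_carrier(1))
  have Pij: "P $$ (r, j) = v j $ r" if "r < n" "j < n" for r j
    using that unfolding P_def mat_of_cols_def by auto
  have colP: "col P j = v j" if "j < n" for j unfolding P_def using that vcar by simp
  have Esv: "Es i *\<^sub>v v j = (if i = j then v j else 0\<^sub>v n)" if ij: "i < n" "j < n" for i j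
  proof -
    have "j \<le> d" using ij n_def by simp
    then obtain w where w: "w \<in> carrier_vec n" "v j = Es j *\<^sub>v w" using vc by blast
    have "Es i *\<^sub>v v j = (Es i * Es j) *\<^sub>v w" using w assoc_mult_mat_vec[OF Esc[OF ij(1)] Esc[OF ij(2)] w(1)] by simp
    also have "\<dots> = (if i = j then v j else 0\<^sub>v n)" using EsEs[OF ij] w by auto
    finally show ?thesis .
  qed
  have EsP: "Es i * P = P * dm n i" if i: "i < n" for i
  proof (rule eq_matI)
    fix r c assume rc: "r < dim_row (P * dm n i)" "c < dim_col (P * dm n i)"
    hence rc': "r < n" "c < n" using Pc by auto
    have "(Es i * P) $$ (r,c) = (Es i *\<^sub>v v c) $ r"
      using rc' Esc[OF i] Pc colP by simp
    also have "\<dots> = (if c = i then v i $ r else 0)" using Esv[OF i rc'(2)] rc' by auto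
    also have "\<dots> = (P * dm n i) $$ (r,c)" using dm_right[OF Pc i rc'] Pij rc' i by auto
    finally show "(Es i * P) $$ (r,c) = (P * dm n i) $$ (r,c)" .
  qed (use Esc Pc i in auto)
  obtain Pi where Pic: "Pi \<in> carrier_mat n n" and PPi: "P * Pi = 1\<^sub>m n" and PiP: "Pi * P = 1\<^sub>m n"
    using mat_inv_ex[OF Pc detP[folded P_def]] by blast
  have PiPM: "Pi * (P * M) = M" if "M \<in> carrier_mat n n" for M
    using that Pic Pc PiP by (simp add: assoc_mult_mat[of Pi n n P n M n, symmetric])
  note asc = assoc_mult_mat[of _ n n _ n _ n] mult_carrier_mat[of _ n n _ n]
  have Es_eq: "Es i = P * dm n i * Pi" if i: "i < n" for i
  proof -
    have "Es i = Es i * (P * Pi)" using PPi Esc[OF i] by simp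
    also have "\<dots> = (Es i * P) * Pi" using Esc[OF i] Pc Pic by simp
    finally show ?thesis using EsP[OF i] by simp
  qed
  have A_eq: "A = P * Y * Pi"
  proof -
    have "A = A * (P * Pi)" using PPi Ac by simp
    also have "\<dots> = (A * P) * Pi" using Ac Pc Pic by simp
    finally show ?thesis using APY[folded P_def] by simp
  qed
  have Asij: "As $$ (r,c) = (\<Sum>i\<le>d. \<theta>s i * Es i $$ (r,c))" if "r < n" "c < n" for r c
    using that unfolding As_def mat_lincomb_def n_def by simp
  have Asc: "As \<in> carrier_mat n n" unfolding As_def mat_lincomb_def n_def by simp
  have AsP: "As * P = P * dg n \<theta>s"
  proof (rule eq_matI)
    fix r j assume rc: "r < dim_row (P * dg n \<theta>s)" "j < dim_col (P * dg n \<theta>s)"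
    hence rc': "r < n" "j < n" using Pc by auto
    have "(As * P) $$ (r,j) = (\<Sum>c<n. As $$ (r,c) * v j $ c)"
    proof -
      have dv: "dim_vec (v j) = n" using vcar[OF rc'(2)] by simp
      have "(As * P) $$ (r,j) = row As r \<bullet> v j" using rc' Asc Pc colP by simp
      also have "\<dots> = (\<Sum>c<n. As $$ (r,c) * v j $ c)" unfolding scalar_prod_def dv
        using Asc rc' by (auto simp: lessThan_atLeast0 intro!: sum.cong)
      finally show ?thesis .
    qed
    also have "\<dots> = (\<Sum>c<n. \<Sum>i\<le>d. \<theta>s i * (Es i $$ (r,c) * v j $ c))"
      using Asij rc' by (simp add: sum_distrib_right mult.assoc)
    also have "\<dots> = (\<Sum>i\<le>d. \<theta>s i * (\<Sum>c<n. Es i $$ (r,c) * v j $ c))"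
      by (subst sum.swap) (simp add: sum_distrib_left)
    also have "\<dots> = (\<Sum>i\<le>d. \<theta>s i * (Es i *\<^sub>v v j) $ r)"
    proof (intro sum.cong refl)
      fix i assume "i \<in> {..d}"
      hence i: "i < n" using n_def by auto
      show "\<theta>s i * (\<Sum>c<n. Es i $$ (r,c) * v j $ c) = \<theta>s i * (Es i *\<^sub>v v j) $ r"
        using Esc[OF i] vcar[OF rc'(2)] rc' by (simp add: scalar_prod_def lessThan_atLeast0)
    qed
    also have "\<dots> = (\<Sum>i\<le>d. if i = j then \<theta>s j * v j $ r else 0)"
      using Esv rc' n_def by (intro sum.cong refl) auto
    also have "\<dots> = \<theta>s j * v j $ r" using rc' n_def by simp
    also have "\<dots> = (P * dg n \<theta>s) $$ (r,j)" using dg_right[OF Pc] rc' Pij by simp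
    finally show "(As * P) $$ (r,j) = (P * dg n \<theta>s) $$ (r,j)" .
  qed (use Asc Pc in auto)
  have As_eq: "As = P * dg n \<theta>s * Pi"
  proof -
    have "As = As * (P * Pi)" using PPi Asc by simp
    also have "\<dots> = (As * P) * Pi" using Asc Pc Pic by simp
    finally show ?thesis using AsP by simp
  qed
  have EAE: "Es i * A * Es j = P * (dm n i * Y * dm n j) * Pi" if ij: "i < n" "j < n" for i j
    unfolding Es_eq[OF ij(1)] Es_eq[OF ij(2)] A_eq using Pc Pic Yc PiP
    by (simp add: asc PiPM)
  have Y0: "Es i * A * Es j = 0\<^sub>m n n \<longleftrightarrow> Y $$ (i,j) = 0" if ij: "i < n" "j < n" for i j
  proof
    assume h: "Es i * A * Es j = 0\<^sub>m n n"
    have "dm n i * Y * dm n j = Pi * (Es i * A * Es j) * P"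
      unfolding EAE[OF ij] using Pc Pic Yc PiP
      by (simp add: asc PiPM)
    also have "\<dots> = 0\<^sub>m n n" unfolding h using Pc Pic by simp
    finally have "(dm n i * Y * dm n j) $$ (i,j) = 0" using ij by simp
    thus "Y $$ (i,j) = 0" using dm_sandwich[OF Yc ij ij] by simp
  next
    assume h: "Y $$ (i,j) = 0"
    have "dm n i * Y * dm n j = 0\<^sub>m n n"
      using dm_sandwich[OF Yc ij] h by (intro eq_matI) auto
    thus "Es i * A * Es j = 0\<^sub>m n n" unfolding EAE[OF ij] using Pc Pic by simp
  qed
  have Ydiag: "Y $$ (i,i) = 0" if i: "i < n" for i
  proof -
    have "mat_trace (Es i * A) = mat_trace (P * (dm n i * Y * Pi))"
      unfolding Es_eq[OF i] A_eq using Pc Pic Yc PiP by (simp add: asc PiPM)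
    also have "\<dots> = mat_trace ((dm n i * Y * Pi) * P)"
      by (rule mat_trace_comm[OF Pc]) (meson mult_carrier_mat dm_carrier Yc Pic)
    also have "\<dots> = mat_trace (dm n i * Y)" using Yc Pic Pc PiP by (simp add: asc)
    also have "\<dots> = Y $$ (i,i)" by (rule trace_dm[OF Yc i])
    finally show ?thesis using bipartite i n_def by simp
  qed
  have Yz: "\<forall>i<n. \<forall>j<n. (i > j+1 \<or> j > i+1) \<longrightarrow> Y$$(i,j) = 0"
  proof (intro allI impI)
    fix i j assume ij: "i < n" "j < n" "i > j+1 \<or> j > i+1"
    have "\<bar>int i - int j\<bar> > 1" using ij(3) by auto
    thus "Y$$(i,j) = 0" using tridiag0 ij n_def Y0[OF ij(1,2)] by auto
  qed
  have Ynz: "\<forall>i. i+1<n \<longrightarrow> Y$$(i+1,i) \<noteq> 0 \<and> Y$$(i,i+1) \<noteq> 0"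
  proof (intro allI impI)
    fix i assume i: "i + 1 < n"
    have "Es (i+1) * A * Es i \<noteq> 0\<^sub>m (d+1) (d+1)" "Es i * A * Es (i+1) \<noteq> 0\<^sub>m (d+1) (d+1)"
      using tridiag1 i n_def by auto
    thus "Y$$(i+1,i) \<noteq> 0 \<and> Y$$(i,i+1) \<noteq> 0" using Y0[of "i+1" i] Y0[of i "i+1"] i n_def by auto
  qed
  have "\<forall>j. \<exists>xv. j \<le> d \<longrightarrow> xv \<in> carrier_vec n \<and> xv \<noteq> 0\<^sub>v n \<and> A *\<^sub>v xv = \<theta> j \<cdot>\<^sub>v xv"
    using eigval Ac unfolding eigenvalue_def eigenvector_def by auto
  then obtain x where xj: "\<forall>j. j \<le> d \<longrightarrow> x j \<in> carrier_vec n \<and> x j \<noteq> 0\<^sub>v n \<and> A *\<^sub>v x j = \<theta> j \<cdot>\<^sub>v x j"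
    by metis
  have xj': "\<forall>j<n. x j \<in> carrier_vec n \<and> x j \<noteq> 0\<^sub>v n \<and> A *\<^sub>v x j = \<theta> j \<cdot>\<^sub>v x j"
    using xj n_def by auto
  have dist': "\<forall>i<n. \<forall>j<n. i \<noteq> j \<longrightarrow> \<theta> i \<noteq> \<theta> j" using mult_free n_def by auto
  define X where "X = mat_of_cols n (map x [0..<n])"
  have Xc: "X \<in> carrier_mat n n" unfolding X_def by (metis length_map length_upt minus_nat.diff_0 mat_of_cols_carrier(1))
  have colX: "col X j = x j" if "j < n" for j unfolding X_def using that xj' by simp
  have Xij: "X $$ (r, j) = x j $ r" if "r < n" "j < n" for r j
    using that unfolding X_def mat_of_cols_def by auto
  have detX: "det X \<noteq> 0" unfolding X_def by (rule eig_indep[OF Ac xj' dist'])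
  obtain Xi where Xic: "Xi \<in> carrier_mat n n" and XXi: "X * Xi = 1\<^sub>m n" and XiX: "Xi * X = 1\<^sub>m n"
    using mat_inv_ex[OF Xc detX] by blast
  have XiXM: "Xi * (X * M) = M" if "M \<in> carrier_mat n n" for M
    using that Xic Xc XiX by (simp add: assoc_mult_mat[of Xi n n X n M n, symmetric])
  have XXiM: "X * (Xi * M) = M" if "M \<in> carrier_mat n n" for M
    using that Xic Xc XXi by (simp add: assoc_mult_mat[of X n n Xi n M n, symmetric])
  have PPiM: "P * (Pi * M) = M" if "M \<in> carrier_mat n n" for M
    using that Pic Pc PPi by (simp add: assoc_mult_mat[of P n n Pi n M n, symmetric])
  have AX: "A * X = X * dg n \<theta>"
  proof (rule eq_matI)
    fix r c assume rc: "r < dim_row (X * dg n \<theta>)" "c < dim_col (X * dg n \<theta>)"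
    hence rc': "r < n" "c < n" using Xc by auto
    have "(A * X) $$ (r,c) = (A *\<^sub>v x c) $ r" using rc' Ac Xc colX by simp
    also have "\<dots> = \<theta> c * x c $ r" using xj' rc' by auto
    also have "\<dots> = (X * dg n \<theta>) $$ (r,c)" using dg_right[OF Xc] rc' Xij by simp
    finally show "(A * X) $$ (r,c) = (X * dg n \<theta>) $$ (r,c)" .
  qed (use Ac Xc in auto)
  have EX: "E k * X = X * dm n k" if k: "k < n" for k
  proof -
    have pk: "primitive_idempotent (d+1) A (\<theta> k) (E k)" using prim k n_def by auto
    hence Ekc: "E k \<in> carrier_mat n n" unfolding primitive_idempotent_def n_def by auto
    show ?thesis
    proof (rule eq_matI)
      fix r c assume rc: "r < dim_row (X * dm n k)" "c < dim_col (X * dm n k)"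
      hence rc': "r < n" "c < n" using Xc by auto
      have "(E k * X) $$ (r,c) = (E k *\<^sub>v x c) $ r" using rc' Ekc Xc colX by simp
      also have "E k *\<^sub>v x c = (if c = k then x c else 0\<^sub>v n)"
      proof (cases "c = k")
        case True then show ?thesis using pk xj' rc' unfolding primitive_idempotent_def n_def by auto
      next
        case False
        hence "\<theta> c \<noteq> \<theta> k" using dist' rc' k by auto
        then show ?thesis using pk xj' rc' False unfolding primitive_idempotent_def n_def by auto
      qed
      also have "(if c = k then x c else 0\<^sub>v n) $ r = (X * dm n k) $$ (r,c)"
        using dm_right[OF Xc k rc'] Xij rc' k by auto
      finally show "(E k * X) $$ (r,c) = (X * dm n k) $$ (r,c)" .
    qed (use Ekc Xc in auto)
  qed
  have E_eq: "E k = X * dm n k * Xi" if k: "k < n" for k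
  proof -
    have pk: "primitive_idempotent (d+1) A (\<theta> k) (E k)" using prim k n_def by auto
    hence Ekc: "E k \<in> carrier_mat n n" unfolding primitive_idempotent_def n_def by auto
    have "E k = E k * (X * Xi)" using XXi Ekc by simp
    also have "\<dots> = (E k * X) * Xi" using Ekc Xc Xic by simp
    finally show ?thesis using EX[OF k] by simp
  qed
  have A_eq2: "A = X * dg n \<theta> * Xi"
  proof -
    have "A = A * (X * Xi)" using XXi Ac by simp
    also have "\<dots> = (A * X) * Xi" using Ac Xc Xic by simp
    finally show ?thesis using AX by simp
  qed
  define T where "T = Xi * As * X"
  define R where "R = Xi * P"
  have Tc: "T \<in> carrier_mat n n" unfolding T_def using Xic Asc Xc by (meson mult_carrier_mat)
  have Rc: "R \<in> carrier_mat n n" unfolding R_def using Xic Pc by (meson mult_carrier_mat)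
  have trE: "mat_trace (E 0 * As) = T $$ (0,0)"
  proof -
    have "mat_trace (E 0 * As) = mat_trace (X * (dm n 0 * Xi * As))"
      unfolding E_eq[OF n0] using Xc Xic Asc by (simp add: asc)
    also have "\<dots> = mat_trace ((dm n 0 * Xi * As) * X)"
      by (rule mat_trace_comm[OF Xc]) (meson mult_carrier_mat dm_carrier Xic Asc)
    also have "\<dots> = mat_trace (dm n 0 * T)" unfolding T_def using Xc Xic Asc by (simp add: asc)
    also have "\<dots> = T $$ (0,0)" by (rule trace_dm[OF Tc n0])
    finally show ?thesis .
  qed
  have T0j: "T $$ (0,j) = 0" if j: "2 \<le> j" "j \<le> d" for j
  proof -
    have jn: "j < n" using j n_def by simp
    have "dm n 0 * T * dm n j = Xi * (E 0 * As * E j) * X"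
      unfolding E_eq[OF n0] E_eq[OF jn] T_def using Xc Xic Asc XiX by (simp add: asc XiXM)
    also have "\<dots> = 0\<^sub>m n n" using nonadj j n_def Xc Xic by simp
    finally have "(dm n 0 * T * dm n j) $$ (0,j) = 0" using jn n0 by simp
    thus ?thesis using dm_sandwich[OF Tc n0 jn n0 jn] by simp
  qed
  have RY: "R * Y = dg n \<theta> * R"
  proof -
    have "R * Y = Xi * (A * P)" unfolding R_def using Xic Pc Yc APY[folded P_def] by (simp add: asc)
    also have "\<dots> = dg n \<theta> * R" unfolding A_eq2 R_def using Xic Xc Pc by (simp add: asc XiXM)
    finally show ?thesis .
  qed
  have RS: "R * dg n \<theta>s = T * R"
  proof -
    have "R * dg n \<theta>s = Xi * (As * P)" unfolding R_def AsP using Xic Pc by (simp add: asc)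
    also have "\<dots> = T * R" unfolding R_def T_def using Xic Xc Pc Asc by (simp add: asc XXiM)
    finally show ?thesis .
  qed
  have RSY: "R * dg n \<theta>s * Y = T * dg n \<theta> * R"
  proof -
    have "R * dg n \<theta>s * Y = T * (R * Y)" unfolding RS using Tc Rc Yc by simp
    also have "\<dots> = T * dg n \<theta> * R" unfolding RY using Tc Rc by (simp add: asc)
    finally show ?thesis .
  qed
  have RdS: "R * dg n \<theta>s = mat n n (\<lambda>(r,c). R $$ (r,c) * \<theta>s c)" by (rule dg_right[OF Rc])
  have TdT: "T * dg n \<theta> = mat n n (\<lambda>(r,c). T $$ (r,c) * \<theta> c)" by (rule dg_right[OF Tc])
  have dTR: "dg n \<theta> * R = mat n n (\<lambda>(r,c). \<theta> r * R $$ (r,c))" by (rule dg_left[OF Rc])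
  have sum_mat: "(M * N) $$ (r,c) = (\<Sum>l<n. M $$ (r,l) * N $$ (l,c))"
    if "M \<in> carrier_mat n n" "N \<in> carrier_mat n n" "r < n" "c < n" for M N :: "'a mat" and r c
    using that by (auto simp: scalar_prod_def lessThan_atLeast0 intro!: sum.cong)
  have TR: "(T * dg n \<theta> * R) $$ (0,c) - \<theta> 1 * (T * R) $$ (0,c) = T$$(0,0) * (\<theta> 0 - \<theta> 1) * R $$ (0,c)"
    if c: "c < n" for c
  proof -
    have m1: "mat n n (\<lambda>(r,c). T $$ (r,c) * \<theta> c) \<in> carrier_mat n n" by simp
    have "(T * dg n \<theta> * R) $$ (0,c) - \<theta> 1 * (T * R) $$ (0,c)
       = (\<Sum>l<n. T $$ (0,l) * \<theta> l * R $$ (l,c)) - \<theta> 1 * (\<Sum>l<n. T $$ (0,l) * R $$ (l,c))"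
      unfolding TdT sum_mat[OF m1 Rc n0 c] sum_mat[OF Tc Rc n0 c] using n0 by simp
    also have "\<dots> = (\<Sum>l<n. T $$ (0,l) * \<theta> l * R $$ (l,c) - \<theta> 1 * (T $$ (0,l) * R $$ (l,c)))"
      by (simp add: sum_subtractf sum_distrib_left)
    also have "\<dots> = (\<Sum>l<n. if l = 0 then T$$(0,0) * (\<theta> 0 - \<theta> 1) * R $$ (0,c) else 0)"
    proof (intro sum.cong refl)
      fix l assume l: "l \<in> {..<n}"
      show "T $$ (0,l) * \<theta> l * R $$ (l,c) - \<theta> 1 * (T $$ (0,l) * R $$ (l,c))
          = (if l = 0 then T$$(0,0) * (\<theta> 0 - \<theta> 1) * R $$ (0,c) else 0)"
      proof (cases "l \<ge> 2")
        case True then show ?thesis using T0j[of l] l n_def by auto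
      next
        case False then consider "l = 0" | "l = 1" by linarith
        then show ?thesis by cases (auto simp: algebra_simps)
      qed
    qed
    also have "\<dots> = T$$(0,0) * (\<theta> 0 - \<theta> 1) * R $$ (0,c)" using n0 by simp
    finally show ?thesis .
  qed
  have rec: "\<forall>c<n. (\<Sum>k<n. R $$ (0,k) * Y$$(k,c)) = \<theta> 0 * R $$ (0,c)"
  proof (intro allI impI)
    fix c assume c: "c < n"
    have "(\<Sum>k<n. R $$ (0,k) * Y$$(k,c)) = (R * Y) $$ (0,c)" using sum_mat[OF Rc Yc n0 c] by simp
    also have "\<dots> = \<theta> 0 * R $$ (0,c)" unfolding RY dTR using c n0 by simp
    finally show "(\<Sum>k<n. R $$ (0,k) * Y$$(k,c)) = \<theta> 0 * R $$ (0,c)" .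
  qed
  have colfact: "\<theta>s k0 * \<theta> 0 * R $$ (0,c) - \<theta> 1 * (R $$ (0,c) * \<theta>s c) = T$$(0,0) * (\<theta> 0 - \<theta> 1) * R $$ (0,c)"
    if c: "c < n" and k0: "k0 < n" and Yk: "\<forall>k<n. k \<noteq> k0 \<longrightarrow> Y $$ (k,c) = 0" for c k0
  proof -
    have m2: "mat n n (\<lambda>(r,c). R $$ (r,c) * \<theta>s c) \<in> carrier_mat n n" by simp
    have "(R * dg n \<theta>s * Y) $$ (0,c) = (\<Sum>k<n. R $$ (0,k) * \<theta>s k * Y $$ (k,c))"
      unfolding RdS sum_mat[OF m2 Yc n0 c] using n0 by simp
    also have "\<dots> = (\<Sum>k<n. if k = k0 then \<theta>s k0 * (R $$ (0,k0) * Y $$ (k0,c)) else 0)"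
      using Yk by (intro sum.cong refl) auto
    also have "\<dots> = \<theta>s k0 * (R $$ (0,k0) * Y $$ (k0,c))" using k0 by simp
    also have "R $$ (0,k0) * Y $$ (k0,c) = (\<Sum>k<n. if k = k0 then R $$ (0,k0) * Y $$ (k0,c) else 0)"
      using k0 by simp
    also have "\<dots> = (\<Sum>k<n. R $$ (0,k) * Y$$(k,c))" using Yk by (intro sum.cong refl) auto
    also have "\<dots> = \<theta> 0 * R $$ (0,c)" using rec c by simp
    finally have e1: "(R * dg n \<theta>s * Y) $$ (0,c) = \<theta>s k0 * (\<theta> 0 * R $$ (0,c))" .
    have e2: "(R * dg n \<theta>s) $$ (0,c) = R $$ (0,c) * \<theta>s c" unfolding RdS using c n0 by simp
    show ?thesis using TR[OF c] unfolding RSY[symmetric] RS[symmetric] e1 e2 by (simp add: algebra_simps)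
  qed
  have Rnz: "\<exists>k<n. R $$ (0,k) \<noteq> 0"
  proof (rule ccontr)
    assume "\<not> ?thesis"
    hence z: "\<forall>k<n. R $$ (0,k) = 0" by auto
    have RR: "R * (Pi * X) = 1\<^sub>m n" unfolding R_def using Xic Pic Pc Xc PPi XiX by (simp add: asc PPiM)
    have Pc2: "Pi * X \<in> carrier_mat n n" using Pic Xc by (meson mult_carrier_mat)
    have "(R * (Pi * X)) $$ (0,0) = 0" unfolding sum_mat[OF Rc Pc2 n0 n0] using z by simp
    thus False unfolding RR using n0 by simp
  qed
  have R00: "R $$ (0,0) \<noteq> 0"
    using tri_fwd[OF Yz Ynz rec, of ] Rnz by auto
  have R0d: "R $$ (0,d) \<noteq> 0"
    using tri_bwd[OF Yz Ynz rec] Rnz n_def by auto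
  have th01: "\<theta> 1 - \<theta> 0 \<noteq> 0" using dist' n_def d3 by auto
  have c0: "\<theta>s 1 * \<theta> 0 * R $$ (0,0) - \<theta> 1 * (R $$ (0,0) * \<theta>s 0) = T$$(0,0) * (\<theta> 0 - \<theta> 1) * R $$ (0,0)"
  proof (rule colfact)
    show "0 < n" "1 < n" using n_def d3 by auto
    show "\<forall>k<n. k \<noteq> 1 \<longrightarrow> Y $$ (k,0) = 0"
    proof (intro allI impI)
      fix k assume k: "k < n" "k \<noteq> 1"
      show "Y $$ (k,0) = 0"
      proof (cases "k = 0")
        case True then show ?thesis using Ydiag n0 by simp
      next
        case False then show ?thesis using Yz k n0 by auto
      qed
    qed
  qed
  have cd: "\<theta>s (d-1) * \<theta> 0 * R $$ (0,d) - \<theta> 1 * (R $$ (0,d) * \<theta>s d) = T$$(0,0) * (\<theta> 0 - \<theta> 1) * R $$ (0,d)"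
  proof (rule colfact)
    show "d < n" "d - 1 < n" using n_def d3 by auto
    show "\<forall>k<n. k \<noteq> d - 1 \<longrightarrow> Y $$ (k,d) = 0"
    proof (intro allI impI)
      fix k assume k: "k < n" "k \<noteq> d - 1"
      show "Y $$ (k,d) = 0"
      proof (cases "k = d")
        case True then show ?thesis using Ydiag dn by simp
      next
        case False then have "d > k + 1" using k n_def d3 by auto
        then show ?thesis using Yz k dn by auto
      qed
    qed
  qed
  have a1: "T$$(0,0) = (\<theta> 1 * \<theta>s 0 - \<theta> 0 * \<theta>s 1) / (\<theta> 1 - \<theta> 0)"
  proof -
    have "(\<theta>s 1 * \<theta> 0 - \<theta> 1 * \<theta>s 0) * R $$ (0,0) = (T$$(0,0) * (\<theta> 0 - \<theta> 1)) * R $$ (0,0)"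
      using c0 by (simp add: algebra_simps)
    hence "\<theta>s 1 * \<theta> 0 - \<theta> 1 * \<theta>s 0 = T$$(0,0) * (\<theta> 0 - \<theta> 1)" using R00 by simp
    thus ?thesis using th01 by (simp add: field_simps)
  qed
  have a2: "T$$(0,0) = (\<theta> 1 * \<theta>s d - \<theta> 0 * \<theta>s (d-1)) / (\<theta> 1 - \<theta> 0)"
  proof -
    have "(\<theta>s (d-1) * \<theta> 0 - \<theta> 1 * \<theta>s d) * R $$ (0,d) = (T$$(0,0) * (\<theta> 0 - \<theta> 1)) * R $$ (0,d)"
      using cd by (simp add: algebra_simps)
    hence "\<theta>s (d-1) * \<theta> 0 - \<theta> 1 * \<theta>s d = T$$(0,0) * (\<theta> 0 - \<theta> 1)" using R0d by simp
    thus ?thesis using th01 by (simp add: field_simps)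
  qed
  show ?thesis using a1 a2 trE by simp
qed

end
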